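(* For any commutative ring $A$, the following are equivalent: (1) $\Gamma(A)$ is path-connected. (2) For any unimodular row $(a,b)$, there exist $a_0,\ldots,a_n\in A$ such that $[a,b]= \infty\cdot S(a_n)S(a_{n-1})\cdots S(a_0)$. (3) Any unimodular pair $(a,b)$ satisfies a weak Euclidean algorithm. (4) $A$ is a $\mathrm{GE}_2$-ring.
   Context: $\Gamma(A)$ is the graph whose vertices are classes $[a,b]$ of unimodular rows modulo multiplication by units, with an edge between $[u],[v]$ when the matrix with rows $u,v$ is in $\mathrm{GL}_2(A)$; $\mathrm{GL}_2(A)$ acts on the right, and $\infty$ denotes the class of $(1,0)$. $S(a)=\left[\begin{smallmatrix}a&1\\1&0\end{smallmatrix}\right]$. A pair $(a,b)$ satisfies a weak Euclidean algorithm if there exist $a_0,\ldots,a_n,r_0,\ldots,r_{n-1}\in A$ such that, with $r_{-2}:=a$, $r_{-1}:=b$, $r_n:=0$, one has $r_{k-2}=a_kr_{k-1}+r_k$ for $0\le k\le n$. $A$ is a $\mathrm{GE}_2$-ring if $\mathrm{GL}_2(A)$ is generated by elementary and invertible diagonal matrices. *)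

theory Defs
  imports Main
begin

text \<open>2x2 matrices over a commutative ring: M2 p q r s has rows (p,q) and (r,s).\<close>
datatype 'a m2 = M2 'a 'a 'a 'a

fun m2_mult :: "'a::comm_ring_1 m2 \<Rightarrow> 'a m2 \<Rightarrow> 'a m2" where
  "m2_mult (M2 p q r s) (M2 p' q' r' s') =
     M2 (p*p' + q*r') (p*q' + q*s') (r*p' + s*r') (r*q' + s*s')"

definition m2_id :: "'a::comm_ring_1 m2" where
  "m2_id = M2 1 0 0 1"

definition in_GL2 :: "'a::comm_ring_1 m2 \<Rightarrow> bool" where
  "in_GL2 M \<longleftrightarrow> (\<exists>N. m2_mult M N = m2_id \<and> m2_mult N M = m2_id)"

fun rows_mat :: "'a \<times> 'a \<Rightarrow> 'a \<times> 'a \<Rightarrow> 'a m2" where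
  "rows_mat (p, q) (r, s) = M2 p q r s"

fun row_act :: "'a::comm_ring_1 \<times> 'a \<Rightarrow> 'a m2 \<Rightarrow> 'a \<times> 'a" where
  "row_act (x, y) (M2 p q r s) = (x*p + y*r, x*q + y*s)"

definition unimodular :: "'a::comm_ring_1 \<times> 'a \<Rightarrow> bool" where
  "unimodular u \<longleftrightarrow> (\<exists>x y. x * fst u + y * snd u = 1)"

definition row_class :: "'a::comm_ring_1 \<times> 'a \<Rightarrow> ('a \<times> 'a) set" where
  "row_class u = {v. \<exists>c. c dvd 1 \<and> v = (c * fst u, c * snd u)}"

definition Gamma_vertices :: "('a::comm_ring_1 \<times> 'a) set set" where
  "Gamma_vertices = {row_class u | u. unimodular u}"

definition Gamma_edge :: "('a::comm_ring_1 \<times> 'a) set \<Rightarrow> ('a \<times> 'a) set \<Rightarrow> bool" where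
  "Gamma_edge X Y \<longleftrightarrow> X \<in> Gamma_vertices \<and> Y \<in> Gamma_vertices \<and>
     (\<exists>u\<in>X. \<exists>v\<in>Y. in_GL2 (rows_mat u v))"

definition Gamma_path_connected :: "'a::comm_ring_1 itself \<Rightarrow> bool" where
  "Gamma_path_connected _ \<longleftrightarrow>
     (\<forall>X\<in>(Gamma_vertices :: ('a \<times> 'a) set set). \<forall>Y\<in>Gamma_vertices. Gamma_edge\<^sup>*\<^sup>* X Y)"

definition S_mat :: "'a::comm_ring_1 \<Rightarrow> 'a m2" where
  "S_mat a = M2 a 1 1 0"

text \<open>prodS [a0, ..., an] = S(an) S(a(n-1)) ... S(a0).\<close>
fun prodS :: "'a::comm_ring_1 list \<Rightarrow> 'a m2" where
  "prodS [] = m2_id"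
| "prodS (x # xs) = m2_mult (prodS xs) (S_mat x)"

definition infty_row :: "'a::comm_ring_1 \<times> 'a" where
  "infty_row = (1, 0)"

text \<open>Weak Euclidean algorithm, with the index shift R k = r_(k-2):
  R 0 = a = r_(-2), R 1 = b = r_(-1), R (n+2) = r_n = 0, and q k = a_k.\<close>
definition weak_euclid :: "'a::comm_ring_1 \<Rightarrow> 'a \<Rightarrow> bool" where
  "weak_euclid a b \<longleftrightarrow> (\<exists>(n::nat) (q::nat \<Rightarrow> 'a) (R::nat \<Rightarrow> 'a).
      R 0 = a \<and> R 1 = b \<and> R (n + 2) = 0 \<and>
      (\<forall>k\<le>n. R k = q k * R (k + 1) + R (k + 2)))"

definition elem12 :: "'a::comm_ring_1 \<Rightarrow> 'a m2" where
  "elem12 x = M2 1 x 0 1"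

definition elem21 :: "'a::comm_ring_1 \<Rightarrow> 'a m2" where
  "elem21 x = M2 1 0 x 1"

inductive_set E_D_generated :: "'a::comm_ring_1 m2 set" where
  gen_id: "m2_id \<in> E_D_generated"
| gen_e12: "elem12 x \<in> E_D_generated"
| gen_e21: "elem21 x \<in> E_D_generated"
| gen_diag: "u dvd 1 \<Longrightarrow> v dvd 1 \<Longrightarrow> M2 u 0 0 v \<in> E_D_generated"
| gen_mult: "M \<in> E_D_generated \<Longrightarrow> N \<in> E_D_generated \<Longrightarrow> m2_mult M N \<in> E_D_generated"
| gen_inv: "M \<in> E_D_generated \<Longrightarrow> m2_mult M N = m2_id \<Longrightarrow> m2_mult N M = m2_id
             \<Longrightarrow> N \<in> E_D_generated"

definition GE2_ring :: "'a::comm_ring_1 itself \<Rightarrow> bool" where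
  "GE2_ring _ \<longleftrightarrow> (\<forall>M :: 'a m2. in_GL2 M \<longrightarrow> M \<in> E_D_generated)"

end

theory Submission
  imports Defs
begin


lemma unit_mult: "a dvd 1 \<Longrightarrow> b dvd 1 \<Longrightarrow> (a*b::'a::comm_ring_1) dvd 1"
  using mult_dvd_mono[of a 1 b 1] by simp

lemma m2_assoc: "m2_mult (m2_mult A B) C = m2_mult A (m2_mult B C)"
  by (cases A; cases B; cases C) (simp add: algebra_simps)

lemma m2_id_l[simp]: "m2_mult m2_id A = A"
  by (cases A) (simp add: m2_id_def)
lemma m2_id_r[simp]: "m2_mult A m2_id = A"
  by (cases A) (simp add: m2_id_def)

lemma row_act_mult: "row_act v (m2_mult M N) = row_act (row_act v M) N"
  by (cases v; cases M; cases N) (simp add: algebra_simps)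

lemma row_act_id[simp]: "row_act v m2_id = v"
  by (cases v) (simp add: m2_id_def)

lemma rows_mat_act: "rows_mat (row_act u M) (row_act v M) = m2_mult (rows_mat u v) M"
  by (cases u; cases v; cases M) simp

lemma row_act_smul: "row_act (c*x, c*y) M = (c * fst (row_act (x,y) M), c * snd (row_act (x,y) M))"
  by (cases M) (simp add: algebra_simps)

lemma row_act_S: "row_act w (S_mat x) = (fst w * x + snd w, fst w)"
  by (cases w) (simp add: S_mat_def)

fun det2 :: "'a::comm_ring_1 m2 \<Rightarrow> 'a" where "det2 (M2 p q r s) = p*s - q*r"

lemma det2_mult: "det2 (m2_mult A B) = det2 A * det2 B"
  by (cases A; cases B) (simp add: algebra_simps)

lemma GL2_det: "in_GL2 M \<Longrightarrow> det2 M dvd 1"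
proof -
  assume "in_GL2 M"
  then obtain N where "m2_mult M N = m2_id" unfolding in_GL2_def by blast
  then have "det2 M * det2 N = 1" by (metis det2_mult det2.simps m2_id_def mult_1 mult_zero_left diff_zero)
  then show ?thesis by (metis dvdI)
qed

lemma GL2_mult: "in_GL2 M \<Longrightarrow> in_GL2 N \<Longrightarrow> in_GL2 (m2_mult M N)"
  unfolding in_GL2_def
proof (elim exE conjE)
  fix M' N' assume a: "m2_mult M M' = m2_id" "m2_mult M' M = m2_id" "m2_mult N N' = m2_id" "m2_mult N' N = m2_id"
  show "\<exists>X. m2_mult (m2_mult M N) X = m2_id \<and> m2_mult X (m2_mult M N) = m2_id"
    by (rule exI[of _ "m2_mult N' M'"]) (simp add: m2_assoc a flip: m2_assoc[of N N' M'] m2_assoc[of M' M N])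
qed

definition Sinv :: "'a::comm_ring_1 \<Rightarrow> 'a m2" where "Sinv x = M2 0 1 1 (-x)"

lemma S_Sinv: "m2_mult (S_mat x) (m2_mult (Sinv x) Y) = Y"
  by (cases Y) (simp add: S_mat_def Sinv_def algebra_simps)
lemma Sinv_S: "m2_mult (Sinv x) (m2_mult (S_mat x) Y) = Y"
  by (cases Y) (simp add: S_mat_def Sinv_def algebra_simps)
lemma prodS_Sinv: "prodS [0,-x,0] = Sinv x"
  by (simp add: S_mat_def Sinv_def m2_id_def)

lemma GL2_S: "in_GL2 (S_mat x)"
  unfolding in_GL2_def using S_Sinv[of x m2_id] Sinv_S[of x m2_id] by auto

lemma GL2_id: "in_GL2 m2_id" unfolding in_GL2_def by auto

lemma GL2_prodS: "in_GL2 (prodS as)"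
  by (induction as) (auto intro: GL2_mult GL2_S GL2_id)

lemma prodS_append: "prodS (xs @ ys) = m2_mult (prodS ys) (prodS xs)"
  by (induction xs) (auto simp: m2_assoc)

fun invS :: "'a::comm_ring_1 list \<Rightarrow> 'a list" where
  "invS [] = []"
| "invS (x # xs) = invS xs @ [0, -x, 0]"

lemma prodS_invS_gen: "m2_mult (prodS as) (m2_mult (prodS (invS as)) Y) = Y \<and> m2_mult (prodS (invS as)) (m2_mult (prodS as) Y) = Y"
proof (induction as arbitrary: Y)
  case Nil then show ?case by simp
next
  case (Cons x xs)
  have e: "prodS (invS (x#xs)) = m2_mult (Sinv x) (prodS (invS xs))"
    by (simp only: invS.simps prodS_append prodS_Sinv)
  show ?case unfolding e by (simp add: m2_assoc S_Sinv Sinv_S Cons.IH)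
qed

lemma prodS_invS: "m2_mult (prodS as) (prodS (invS as)) = m2_id" "m2_mult (prodS (invS as)) (prodS as) = m2_id"
  using prodS_invS_gen[of as m2_id] by auto

lemma prodS_00: "prodS [0,0] = m2_id"
  by (simp add: S_mat_def m2_id_def)

lemma inv_unique: "m2_mult N M = m2_id \<Longrightarrow> m2_mult M N' = m2_id \<Longrightarrow> N = N'"
  by (metis m2_assoc m2_id_l m2_id_r)

lemma row_class_mem: "u \<in> row_class u"
  unfolding row_class_def by (auto intro!: exI[of _ 1])

lemma row_class_eq: assumes "v \<in> row_class u" shows "row_class v = row_class u"
proof -
  obtain c where c: "c dvd 1" "v = (c*fst u, c*snd u)" using assms unfolding row_class_def by blast
  obtain d where d: "1 = c*d" using c(1) by (auto elim: dvdE)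
  have du: "d dvd 1" using d by (metis dvdI mult.commute)
  show ?thesis
  proof (rule set_eqI, rule iffI)
    fix w assume "w \<in> row_class v"
    then obtain e where e: "e dvd 1" "w = (e*fst v, e*snd v)" unfolding row_class_def by blast
    show "w \<in> row_class u" unfolding row_class_def
      using e c unit_mult[OF e(1) c(1)] by (auto intro!: exI[of _ "e*c"] simp: mult.assoc)
  next
    fix w assume "w \<in> row_class u"
    then obtain e where e: "e dvd 1" "w = (e*fst u, e*snd u)" unfolding row_class_def by blast
    have "fst u = d * fst v" "snd u = d * snd v" using c d by (simp_all add: mult.assoc[symmetric] mult.commute[of d c])
    then show "w \<in> row_class v" unfolding row_class_def
      using e unit_mult[OF e(1) du] by (auto intro!: exI[of _ "e*d"] simp: mult.assoc)
  qed
qed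

lemma row_class_iff: "row_class u = row_class v \<longleftrightarrow> u \<in> row_class v"
  using row_class_eq row_class_mem by metis

lemma row_class_scale: "c dvd 1 \<Longrightarrow> row_class (c*x, c*y) = row_class (x,y)"
  by (rule row_class_eq) (auto simp: row_class_def)



lemma GL2_rows_unimod: "in_GL2 (rows_mat u v) \<Longrightarrow> unimodular u \<and> unimodular v"
proof -
  assume "in_GL2 (rows_mat u v)"
  then obtain N where N: "m2_mult (rows_mat u v) N = m2_id" unfolding in_GL2_def by blast
  obtain p q where u: "u = (p,q)" by (cases u)
  obtain r s where v: "v = (r,s)" by (cases v)
  obtain n1 n2 n3 n4 where n: "N = M2 n1 n2 n3 n4" by (cases N)
  from N have "p*n1 + q*n3 = 1" "r*n2+s*n4 = 1" by (simp_all add: u v n m2_id_def)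
  then show ?thesis unfolding unimodular_def u v
    by (metis fst_conv snd_conv mult.commute)
qed

lemma edge_intro: "in_GL2 (rows_mat u v) \<Longrightarrow> Gamma_edge (row_class u) (row_class v)"
  unfolding Gamma_edge_def Gamma_vertices_def
  using GL2_rows_unimod row_class_mem by blast

lemma edge_sym: "Gamma_edge X Y \<Longrightarrow> Gamma_edge Y X"
proof -
  assume e: "Gamma_edge X Y"
  then obtain u v where uv: "u \<in> X" "v \<in> Y" "in_GL2 (rows_mat u v)" unfolding Gamma_edge_def by blast
  have sw: "in_GL2 (M2 0 1 1 (0::'a))" unfolding in_GL2_def by (auto intro!: exI[of _ "M2 0 1 1 0"] simp: m2_id_def)
  have "rows_mat v u = m2_mult (M2 0 1 1 0) (rows_mat u v)" by (cases u; cases v) simp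
  then have "in_GL2 (rows_mat v u)" using GL2_mult[OF sw uv(3)] by simp
  then show ?thesis using e uv unfolding Gamma_edge_def by blast
qed

lemma rt_sym: "Gamma_edge\<^sup>*\<^sup>* X Y \<Longrightarrow> Gamma_edge\<^sup>*\<^sup>* Y X"
  by (induction rule: rtranclp.induct) (auto intro: converse_rtranclp_into_rtranclp edge_sym)

lemma conn_prodS: "Gamma_edge\<^sup>*\<^sup>* (row_class (1,0)) (row_class (row_act (1,0) (prodS as)))"
proof (induction as rule: rev_induct)
  case Nil then show ?case by simp
next
  case (snoc x xs)
  have "prodS (xs @ [x]) = m2_mult (S_mat x) (prodS xs)" by (simp add: prodS_append)
  then have e: "row_act (1,0) (prodS (xs @ [x])) = row_act (x,1) (prodS xs)"
    by (simp add: row_act_mult S_mat_def)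
  have g: "in_GL2 (M2 1 0 x 1)" unfolding in_GL2_def
    by (auto intro!: exI[of _ "M2 1 0 (-x) 1"] simp: m2_id_def)
  have "rows_mat (row_act (1,0) (prodS xs)) (row_act (x,1) (prodS xs)) = m2_mult (M2 1 0 x 1) (prodS xs)"
    by (simp add: rows_mat_act)
  then have "in_GL2 (rows_mat (row_act (1,0) (prodS xs)) (row_act (x,1) (prodS xs)))"
    using GL2_mult[OF g GL2_prodS] by simp
  then show ?case using snoc e edge_intro by (metis rtranclp.rtrancl_into_rtrancl)
qed

lemma unit_from_det: assumes "in_GL2 (M2 c 0 r s)" shows "c dvd 1" "s dvd 1"
proof -
  have "det2 (M2 c 0 r s) dvd 1" using GL2_det[OF assms] .
  then have "c*s dvd 1" by simp
  then show "c dvd 1" "s dvd 1" by (auto dest: dvd_mult_left dvd_mult_right)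
qed

lemma edge_step:
  assumes "Gamma_edge (row_class (row_act (1,0) (prodS as))) Z"
  shows "\<exists>x. Z = row_class (row_act (1,0) (prodS (as @ [x])))"
proof -
  define P where "P = prodS as"
  define Pi where "Pi = prodS (invS as)"
  have PPi: "m2_mult P Pi = m2_id" "m2_mult Pi P = m2_id" unfolding P_def Pi_def using prodS_invS by auto
  obtain u v where uv: "u \<in> row_class (row_act (1,0) P)" "v \<in> Z" "in_GL2 (rows_mat u v)" "Z \<in> Gamma_vertices"
    using assms unfolding Gamma_edge_def P_def by blast
  obtain w where "Z = row_class w" using uv(4) unfolding Gamma_vertices_def by blast
  then have Zv: "Z = row_class v" using uv(2) row_class_eq by metis
  obtain c where c: "c dvd 1" "u = (c * fst (row_act (1,0) P), c * snd (row_act (1,0) P))"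
    using uv(1) unfolding row_class_def by blast
  have uPi: "row_act u Pi = (c, 0)"
    using c(2) by (simp add: row_act_smul row_act_mult[symmetric] PPi)
  obtain r s where rs: "row_act v Pi = (r,s)" by (cases "row_act v Pi")
  have "rows_mat (row_act u Pi) (row_act v Pi) = m2_mult (rows_mat u v) Pi" by (rule rows_mat_act)
  then have "in_GL2 (M2 c 0 r s)" using GL2_mult[OF uv(3) GL2_prodS[of "invS as"]] uPi rs Pi_def by simp
  then have "s dvd 1" by (rule unit_from_det)
  then obtain t where t: "1 = s*t" by (auto elim: dvdE)
  have v: "v = row_act (r,s) P" using rs by (metis row_act_mult PPi(2) row_act_id)
  have "(r,s) = (s * (r*t), s * 1)" using t by (metis mult.assoc mult.left_commute mult_1_right)
  then have "v = (s * fst (row_act (r*t,1) P), s * snd (row_act (r*t,1) P))"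
    using v row_act_smul by metis
  then have "Z = row_class (row_act (r*t,1) P)" using Zv row_class_scale[OF \<open>s dvd 1\<close>] by simp
  moreover have "row_act (1,0) (prodS (as @ [r*t])) = row_act (r*t,1) P"
    by (simp add: prodS_append row_act_mult S_mat_def P_def)
  ultimately show ?thesis by metis
qed

lemma reach: "Gamma_edge\<^sup>*\<^sup>* (row_class (1,0)) Y \<Longrightarrow> \<exists>bs. Y = row_class (row_act (1,0) (prodS bs))"
proof (induction rule: rtranclp_induct)
  case base then show ?case by (auto intro!: exI[of _ "[]"])
next
  case (step Y Z)
  then obtain bs where "Y = row_class (row_act (1,0) (prodS bs))" by blast
  then show ?case using edge_step step(2) by metis
qed

lemma nonempty_fix: "row_class u = row_class (row_act (1,0) (prodS as)) \<Longrightarrow>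
   \<exists>as. as \<noteq> [] \<and> row_class u = row_class (row_act infty_row (prodS as))"
  by (rule exI[of _ "as @ [0,0]"]) (simp add: prodS_append prodS_00[simplified] infty_row_def)

lemma L12:
  fixes T :: "'a::comm_ring_1 itself"
  shows "Gamma_path_connected T \<longleftrightarrow>
           (\<forall>a b::'a. unimodular (a, b) \<longrightarrow>
              (\<exists>as. as \<noteq> [] \<and> row_class (a, b) = row_class (row_act infty_row (prodS as))))"
proof
  assume H: "Gamma_path_connected T"
  show "\<forall>a b::'a. unimodular (a, b) \<longrightarrow>
              (\<exists>as. as \<noteq> [] \<and> row_class (a, b) = row_class (row_act infty_row (prodS as)))"
  proof (intro allI impI)
    fix a b :: 'a assume "unimodular (a,b)"
    then have "row_class (a,b) \<in> Gamma_vertices" unfolding Gamma_vertices_def by blast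
    moreover have "row_class (1::'a,0) \<in> Gamma_vertices" proof -
      have "unimodular (1::'a,0::'a)" unfolding unimodular_def by (rule exI[of _ 1], rule exI[of _ 0]) simp
      then show ?thesis unfolding Gamma_vertices_def by blast
    qed
    ultimately have "Gamma_edge\<^sup>*\<^sup>* (row_class (1::'a,0)) (row_class (a,b))"
      using H unfolding Gamma_path_connected_def by blast
    then show "\<exists>as. as \<noteq> [] \<and> row_class (a, b) = row_class (row_act infty_row (prodS as))"
      using reach nonempty_fix by metis
  qed
next
  assume H: "\<forall>a b::'a. unimodular (a, b) \<longrightarrow>
              (\<exists>as. as \<noteq> [] \<and> row_class (a, b) = row_class (row_act infty_row (prodS as)))"
  have R: "Gamma_edge\<^sup>*\<^sup>* (row_class (1::'a,0)) X" if XV: "X \<in> Gamma_vertices" for X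
  proof -
    obtain a b :: 'a where X: "X = row_class (a,b)" "unimodular (a,b)" using XV unfolding Gamma_vertices_def by fastforce
    then obtain as where "row_class (a, b) = row_class (row_act infty_row (prodS as))" using H by blast
    then show ?thesis using conn_prodS X unfolding infty_row_def by metis
  qed
  show "Gamma_path_connected T" unfolding Gamma_path_connected_def
    using R rt_sym by (metis rtranclp_trans)
qed



lemma WE_to_prod:
  assumes "weak_euclid a b"
  shows "\<exists>as c. as \<noteq> [] \<and> (a,b) = row_act (c,0) (prodS as)"
proof -
  obtain n :: nat and q R where R: "R 0 = a" "R 1 = b" "R (n+2) = 0" "\<forall>k\<le>n. R k = q k * R (k+1) + R (k+2)"
    using assms unfolding weak_euclid_def by blast
  have key: "\<forall>k. k + m = n+1 \<longrightarrow> (R k, R (k+1)) = row_act (R (n+1), 0) (prodS (map q [k..<n+1]))" for m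
  proof (induction m)
    case 0 then show ?case using R(3) by (auto simp: numeral_2_eq_2)
  next
    case (Suc m)
    show ?case
    proof (intro allI impI)
      fix k assume k: "k + Suc m = n+1"
      then have "k+1+m = n+1" by simp
      with Suc.IH have IH: "(R (k+1), R (k+2)) = row_act (R (n+1), 0) (prodS (map q [k+1..<n+1]))"
        by (metis add_Suc_right one_add_one add.assoc)
      have "[k..<n+1] = k # [k+1..<n+1]" using k by (simp add: upt_conv_Cons)
      then have "prodS (map q [k..<n+1]) = m2_mult (prodS (map q [k+1..<n+1])) (S_mat (q k))" by simp
      then have "row_act (R (n+1), 0) (prodS (map q [k..<n+1])) = row_act (R (k+1), R (k+2)) (S_mat (q k))"
        by (simp only: row_act_mult IH)
      also have "\<dots> = (R k, R (k+1))" using R(4) k by (simp add: row_act_S mult.commute)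
      finally show "(R k, R (k+1)) = row_act (R (n+1), 0) (prodS (map q [k..<n+1]))" by simp
    qed
  qed
  have "(R 0, R (0+1)) = row_act (R (n+1), 0) (prodS (map q [0..<n+1]))" using key[of "n+1"] by (metis add_0)
  then show ?thesis using R(1,2) by (intro exI[of _ "map q [0..<n+1]"] exI[of _ "R (n+1)"]) simp
qed

lemma prod_to_WE:
  assumes ne: "as \<noteq> []" and ab: "(a,b) = row_act (c,0) (prodS as)"
  shows "weak_euclid a b"
proof -
  define n where "n = length as - 1"
  have len: "length as = n+1" using ne n_def by simp
  define v where "v k = row_act (c,0) (prodS (drop k as))" for k
  define R where "R k = (if k \<le> n+1 then fst (v k) else 0)" for k
  have vS: "v k = row_act (v (k+1)) (S_mat (as!k))" if "k \<le> n" for k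
  proof -
    have "drop k as = as!k # drop (k+1) as" using that len by (simp add: Cons_nth_drop_Suc)
    then show ?thesis unfolding v_def by (simp add: row_act_mult)
  qed
  have sndv: "snd (v k) = R (k+1)" if "k \<le> n+1" for k
  proof (cases "k = n+1")
    case True
    then have "drop k as = []" using len by simp
    then show ?thesis using True unfolding v_def R_def by simp
  next
    case False
    then have "k \<le> n" using that by simp
    then show ?thesis using vS[of k] unfolding R_def by (simp add: row_act_S)
  qed
  have rec: "\<forall>k\<le>n. R k = (as!k) * R (k+1) + R (k+2)"
  proof (intro allI impI)
    fix k assume k: "k \<le> n"
    have "R k = fst (v k)" using k R_def by simp
    also have "\<dots> = fst (v (k+1)) * as!k + snd (v (k+1))" using vS[OF k] by (simp add: row_act_S)
    also have "\<dots> = R (k+1) * as!k + R (k+2)" using k sndv[of "k+1"] R_def by simp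
    finally show "R k = (as!k) * R (k+1) + R (k+2)" by (simp add: mult.commute)
  qed
  have v0: "v 0 = (a,b)" using ab v_def by simp
  have "R 0 = a" using v0 R_def by simp
  moreover have "R 1 = b" using sndv[of 0] v0 by simp
  moreover have "R (n+2) = 0" using R_def by simp
  ultimately show ?thesis unfolding weak_euclid_def using rec by blast
qed

lemma L23pt:
  assumes um: "unimodular (a,b)"
  shows "(\<exists>as. as \<noteq> [] \<and> row_class (a, b) = row_class (row_act infty_row (prodS as))) \<longleftrightarrow> weak_euclid a b"
proof
  assume "\<exists>as. as \<noteq> [] \<and> row_class (a, b) = row_class (row_act infty_row (prodS as))"
  then obtain as where as: "as \<noteq> []" "(a,b) \<in> row_class (row_act (1,0) (prodS as))"
    using row_class_iff unfolding infty_row_def by metis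
  then obtain c where "(a,b) = (c * fst (row_act (1,0) (prodS as)), c * snd (row_act (1,0) (prodS as)))"
    unfolding row_class_def by blast
  then have "(a,b) = row_act (c,0) (prodS as)" using row_act_smul[of c 1 0] by simp
  then show "weak_euclid a b" using prod_to_WE as(1) by blast
next
  assume "weak_euclid a b"
  then obtain as c where as: "as \<noteq> []" "(a,b) = row_act (c,0) (prodS as)" using WE_to_prod by blast
  obtain x y where xy: "x*a + y*b = 1" using um unfolding unimodular_def by auto
  have e: "(a,b) = (c * fst (row_act (1,0) (prodS as)), c * snd (row_act (1,0) (prodS as)))"
    using as(2) row_act_smul[of c 1 0] by simp
  then have "c * (x * fst (row_act (1,0) (prodS as)) + y * snd (row_act (1,0) (prodS as))) = 1"
    using xy by (simp add: algebra_simps)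
  then have "c dvd 1" by (metis dvdI)
  then have "row_class (a,b) = row_class (row_act infty_row (prodS as))"
    using e row_class_scale unfolding infty_row_def by (metis prod.collapse)
  then show "\<exists>as. as \<noteq> [] \<and> row_class (a, b) = row_class (row_act infty_row (prodS as))" using as(1) by blast
qed



lemma push_diag:
  "u dvd 1 \<Longrightarrow> v dvd 1 \<Longrightarrow> \<exists>u' v' bs. u' dvd 1 \<and> v' dvd 1 \<and>
     m2_mult (prodS as) (M2 u 0 0 v) = m2_mult (M2 u' 0 0 v') (prodS bs)"
proof (induction as arbitrary: u v)
  case Nil then show ?case by (intro exI[of _ u] exI[of _ v] exI[of _ "[]"]) simp
next
  case (Cons x xs)
  obtain w where w: "1 = v*w" using Cons.prems(2) by (auto elim: dvdE)
  have "m2_mult (S_mat x) (M2 u 0 0 v) = m2_mult (M2 v 0 0 u) (S_mat (x*u*w))"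
  proof -
    have "v*(x*u*w) = x*u" using w by (metis mult.assoc mult.commute mult_1_right)
    then show ?thesis by (simp add: S_mat_def)
  qed
  obtain u' v' bs where h: "u' dvd 1" "v' dvd 1" "m2_mult (prodS xs) (M2 v 0 0 u) = m2_mult (M2 u' 0 0 v') (prodS bs)"
    using Cons.IH[OF Cons.prems(2) Cons.prems(1)] by blast
  have "m2_mult (prodS (x#xs)) (M2 u 0 0 v) = m2_mult (prodS xs) (m2_mult (M2 v 0 0 u) (S_mat (x*u*w)))"
    by (simp add: m2_assoc \<open>m2_mult (S_mat x) (M2 u 0 0 v) = _\<close>)
  also have "\<dots> = m2_mult (M2 u' 0 0 v') (prodS (x*u*w # bs))"
    by (simp add: m2_assoc[symmetric] h(3))
  finally show ?case using h by blast
qed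

definition inH :: "'a::comm_ring_1 m2 \<Rightarrow> bool" where
  "inH M \<longleftrightarrow> (\<exists>u v as. u dvd 1 \<and> v dvd 1 \<and> M = m2_mult (M2 u 0 0 v) (prodS as))"

lemma diag_mult: "m2_mult (M2 a 0 0 b) (M2 c 0 0 d) = M2 (a*c) 0 0 (b*d)" by simp

lemma inH_mult: assumes "inH M" "inH N" shows "inH (m2_mult M N)"
proof -
  obtain u v as where M: "u dvd 1" "v dvd 1" "M = m2_mult (M2 u 0 0 v) (prodS as)" using assms(1) unfolding inH_def by blast
  obtain u2 v2 as2 where N: "u2 dvd 1" "v2 dvd 1" "N = m2_mult (M2 u2 0 0 v2) (prodS as2)" using assms(2) unfolding inH_def by blast
  obtain u3 v3 bs where P: "u3 dvd 1" "v3 dvd 1" "m2_mult (prodS as) (M2 u2 0 0 v2) = m2_mult (M2 u3 0 0 v3) (prodS bs)"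
    using push_diag[OF N(1,2), of as] by blast
  have "m2_mult M N = m2_mult (m2_mult (M2 u 0 0 v) (M2 u3 0 0 v3)) (m2_mult (prodS bs) (prodS as2))"
  proof -
    have "m2_mult M N = m2_mult (M2 u 0 0 v) (m2_mult (m2_mult (prodS as) (M2 u2 0 0 v2)) (prodS as2))"
      unfolding M(3) N(3) by (simp only: m2_assoc)
    also have "\<dots> = m2_mult (M2 u 0 0 v) (m2_mult (m2_mult (M2 u3 0 0 v3) (prodS bs)) (prodS as2))"
      by (simp only: P(3))
    finally show ?thesis by (simp only: m2_assoc)
  qed
  also have "\<dots> = m2_mult (M2 (u*u3) 0 0 (v*v3)) (prodS (as2 @ bs))" by (simp only: diag_mult prodS_append)
  finally have "m2_mult M N = m2_mult (M2 (u*u3) 0 0 (v*v3)) (prodS (as2 @ bs))" .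
  moreover have "u*u3 dvd 1" "v*v3 dvd 1" using unit_mult[OF M(1) P(1)] unit_mult[OF M(2) P(2)] by auto
  ultimately show ?thesis unfolding inH_def by blast
qed

lemma inH_inv: assumes "inH M" "m2_mult M N = m2_id" "m2_mult N M = m2_id" shows "inH N"
proof -
  obtain u v as where M: "u dvd 1" "v dvd 1" "M = m2_mult (M2 u 0 0 v) (prodS as)" using assms(1) unfolding inH_def by blast
  obtain u' where u': "1 = u*u'" using M(1) by (auto elim: dvdE)
  obtain v' where v': "1 = v*v'" using M(2) by (auto elim: dvdE)
  have u'1: "u' dvd 1" "v' dvd 1" using u' v' by (metis dvdI mult.commute)+
  define N' where "N' = m2_mult (prodS (invS as)) (M2 u' 0 0 v')"
  have "m2_mult M N' = m2_mult (M2 u 0 0 v) (m2_mult (prodS as) (m2_mult (prodS (invS as)) (M2 u' 0 0 v')))"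
    unfolding N'_def M(3) by (simp add: m2_assoc)
  also have "\<dots> = m2_id" proof -
    have "m2_mult (prodS as) (m2_mult (prodS (invS as)) (M2 u' 0 0 v')) = M2 u' 0 0 v'"
      using prodS_invS_gen by blast
    then show ?thesis using u'[symmetric] v'[symmetric] by (simp add: m2_id_def)
  qed
  finally have "N = N'" using inv_unique assms(3) by metis
  then show ?thesis unfolding N'_def
    using push_diag[OF u'1, of "invS as"] unfolding inH_def by blast
qed

lemma ED_inH: "M \<in> E_D_generated \<Longrightarrow> inH M"
proof (induction rule: E_D_generated.induct)
  case gen_id then show ?case unfolding inH_def
    by (intro exI[of _ 1] exI[of _ "[]"]) (simp add: m2_id_def)
next
  case (gen_e12 x) then show ?case unfolding inH_def
    by (intro exI[of _ 1] exI[of _ "[0,x]"]) (simp add: m2_id_def elem12_def S_mat_def)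
next
  case (gen_e21 x) then show ?case unfolding inH_def
    by (intro exI[of _ 1] exI[of _ "[x,0]"]) (simp add: m2_id_def elem21_def S_mat_def)
next
  case (gen_diag u v) then show ?case unfolding inH_def
    by (intro exI[of _ u] exI[of _ v] exI[of _ "[]"]) simp
next
  case (gen_mult M N) then show ?case using inH_mult by blast
next
  case (gen_inv M N) then show ?case using inH_inv by blast
qed

lemma S_ED: "S_mat x \<in> E_D_generated"
proof -
  have "S_mat (0::'a) = m2_mult (elem12 1) (m2_mult (elem21 (-1)) (m2_mult (elem12 1) (M2 (-1) 0 0 1)))"
    by (simp add: S_mat_def elem12_def elem21_def)
  then have s0: "S_mat (0::'a) \<in> E_D_generated"
    by (auto intro!: E_D_generated.gen_mult E_D_generated.gen_e12 E_D_generated.gen_e21 E_D_generated.gen_diag)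
  have "S_mat x = m2_mult (elem12 x) (S_mat 0)" by (simp add: S_mat_def elem12_def)
  then show ?thesis using s0 by (auto intro!: E_D_generated.gen_mult E_D_generated.gen_e12)
qed

lemma prodS_ED: "prodS as \<in> E_D_generated"
  by (induction as) (auto intro: E_D_generated.intros S_ED)

lemma completion: assumes "x*a + y*b = (1::'a::comm_ring_1)" shows "\<exists>N. m2_mult (M2 a b (- y) x) N = m2_id \<and> m2_mult N (M2 a b (- y) x) = m2_id"
proof -
  have "m2_mult (M2 a b (- y) x) (M2 x (- b) y a) = m2_id \<and> m2_mult (M2 x (- b) y a) (M2 a b (- y) x) = m2_id"
    unfolding m2_id_def by (simp add: mult.commute[of a b] mult.commute[of y x]) (metis assms mult.commute add.commute)
  then show ?thesis by blast
qed

lemma L24: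
  fixes T :: "'a::comm_ring_1 itself"
  shows "(\<forall>a b::'a. unimodular (a, b) \<longrightarrow>
              (\<exists>as. as \<noteq> [] \<and> row_class (a, b) = row_class (row_act infty_row (prodS as))))
         \<longleftrightarrow> GE2_ring T"
proof
  assume H: "\<forall>a b::'a. unimodular (a, b) \<longrightarrow>
              (\<exists>as. as \<noteq> [] \<and> row_class (a, b) = row_class (row_act infty_row (prodS as)))"
  show "GE2_ring T" unfolding GE2_ring_def
  proof (intro allI impI)
    fix M :: "'a m2" assume GM: "in_GL2 M"
    obtain a b where ab: "row_act (1,0) M = (a,b)" by (cases "row_act (1,0) M")
    have "unimodular (a,b)"
    proof -
      obtain N where N: "m2_mult M N = m2_id" using GM unfolding in_GL2_def by blast
      obtain p q r s where Mp: "M = M2 p q r s" by (cases M)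
      obtain n1 n2 n3 n4 where n: "N = M2 n1 n2 n3 n4" by (cases N)
      from N have "p*n1 + q*n3 = 1" by (simp add: Mp n m2_id_def)
      moreover have "a = p" "b = q" using ab Mp by simp_all
      ultimately show ?thesis unfolding unimodular_def by (metis fst_conv snd_conv mult.commute)
    qed
    then obtain as where "row_class (a, b) = row_class (row_act (1,0) (prodS as))"
      using H unfolding infty_row_def by blast
    then have "(a,b) \<in> row_class (row_act (1,0) (prodS as))" using row_class_iff by metis
    then obtain c where c: "c dvd 1" "(a,b) = (c * fst (row_act (1,0) (prodS as)), c * snd (row_act (1,0) (prodS as)))"
      unfolding row_class_def by blast
    define P where "P = prodS as"
    define Pi where "Pi = prodS (invS as)"
    have PPi: "m2_mult P Pi = m2_id" "m2_mult Pi P = m2_id" unfolding P_def Pi_def using prodS_invS by auto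
    define K where "K = m2_mult M Pi"
    have "row_act (1,0) K = row_act (a,b) Pi" unfolding K_def by (simp add: row_act_mult ab)
    also have "\<dots> = (c, 0)" proof -
      have "row_act (a,b) Pi = (c * fst (row_act (1,0) (m2_mult P Pi)), c * snd (row_act (1,0) (m2_mult P Pi)))"
        using c(2) row_act_smul[of c "fst (row_act (1,0) P)" "snd (row_act (1,0) P)" Pi]
        by (simp add: row_act_mult P_def)
      then show ?thesis by (simp add: PPi)
    qed
    finally have rK: "row_act (1,0) K = (c,0)" .
    obtain k1 k2 r s where Kd: "K = M2 k1 k2 r s" by (cases K)
    then have K: "K = M2 c 0 r s" using rK by simp
    have "in_GL2 K" unfolding K_def Pi_def using GM GL2_prodS GL2_mult by blast
    then have "s dvd 1" using K unit_from_det by metis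
    obtain w where w: "1 = c*w" using c(1) by (auto elim: dvdE)
    have "r*w*c = r" using w by (metis mult.assoc mult.commute mult_1_right)
    then have "K = m2_mult (elem21 (r*w)) (M2 c 0 0 s)" using K
      by (simp add: elem21_def)
    then have KE: "K \<in> E_D_generated" using c(1) \<open>s dvd 1\<close> by (auto intro!: E_D_generated.gen_mult E_D_generated.gen_e21 E_D_generated.gen_diag)
    have "M = m2_mult K P" unfolding K_def by (simp add: m2_assoc PPi)
    then show "M \<in> E_D_generated" using KE prodS_ED[of as] unfolding P_def by (simp add: E_D_generated.gen_mult)
  qed
next
  assume G: "GE2_ring T"
  show "\<forall>a b::'a. unimodular (a, b) \<longrightarrow>
              (\<exists>as. as \<noteq> [] \<and> row_class (a, b) = row_class (row_act infty_row (prodS as)))"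
  proof (intro allI impI)
    fix a b :: 'a assume "unimodular (a,b)"
    then obtain x y where xy: "x*a + y*b = 1" unfolding unimodular_def by auto
    have "in_GL2 (M2 a b (-y) x)" unfolding in_GL2_def by (rule completion[OF xy])
    then have "M2 a b (-y) x \<in> E_D_generated" using G unfolding GE2_ring_def by simp
    then obtain u v as where uv: "u dvd 1" "v dvd 1" "M2 a b (-y) x = m2_mult (M2 u 0 0 v) (prodS as)"
      using ED_inH[of "M2 a b (-y) x"] unfolding inH_def by auto
    have "(a,b) = row_act (1,0) (M2 a b (-y) x)" by simp
    also have "\<dots> = row_act (u*1, u*0) (prodS as)" unfolding uv(3) by (simp add: row_act_mult)
    also have "\<dots> = (u * fst (row_act (1,0) (prodS as)), u * snd (row_act (1,0) (prodS as)))" by (rule row_act_smul)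
    finally have "row_class (a,b) = row_class (row_act (1,0) (prodS as))"
      using row_class_scale[OF uv(1), of "fst (row_act (1,0) (prodS as))" "snd (row_act (1,0) (prodS as))"] by simp
    then show "\<exists>as. as \<noteq> [] \<and> row_class (a, b) = row_class (row_act infty_row (prodS as))"
      by (rule nonempty_fix)
  qed
qed


theorem proposition3p7:
  fixes T :: "'a::comm_ring_1 itself"
  shows "(Gamma_path_connected T \<longleftrightarrow>
           (\<forall>a b::'a. unimodular (a, b) \<longrightarrow>
              (\<exists>as. as \<noteq> [] \<and> row_class (a, b) = row_class (row_act infty_row (prodS as)))))
       \<and> ((\<forall>a b::'a. unimodular (a, b) \<longrightarrow>
              (\<exists>as. as \<noteq> [] \<and> row_class (a, b) = row_class (row_act infty_row (prodS as))))
           \<longleftrightarrow> (\<forall>a b::'a. unimodular (a, b) \<longrightarrow> weak_euclid a b))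
       \<and> ((\<forall>a b::'a. unimodular (a, b) \<longrightarrow> weak_euclid a b) \<longleftrightarrow> GE2_ring T)"
proof -
  have e23: "(\<forall>a b::'a. unimodular (a, b) \<longrightarrow>
              (\<exists>as. as \<noteq> [] \<and> row_class (a, b) = row_class (row_act infty_row (prodS as))))
           \<longleftrightarrow> (\<forall>a b::'a. unimodular (a, b) \<longrightarrow> weak_euclid a b)"
    using L23pt by blast
  show ?thesis using L12[of T] e23 L24[of T] by blast
qed

end
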